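(* For generic $a$ ($a\neq1$) and $k$, each of the following three pairs is a WP-Bailey pair relative to $a$ with parameter $k$ (all formulas valid for $n\ge0$): (i) $\boldsymbol{\alpha}_n=\dfrac{(-1)^nq^{n(n-1)/2}(1-aq^{2n})(a;q)_n}{(1-a)(q;q)_n}$, $\boldsymbol{\beta}_n=\dfrac{(-1)^nk^nq^{n(n-1)/2}(k;q)_n}{a^n(q;q)_n}$; (ii) $\boldsymbol{\alpha}_n=\dfrac{(-1)^na^{-n}(1-aq^{2n})(a^2;q^2)_n}{(1-a)(q^2;q^2)_n}$, $\boldsymbol{\beta}_n=\dfrac{(-1)^na^{-n}(k^2;q^2)_n}{(q^2;q^2)_n}$; (iii) $\boldsymbol{\alpha}_n=\dfrac{q^{-n/2}(1-aq^{2n})(a,\sqrt{q};q)_n}{(1-a)(q,a\sqrt{q};q)_n}$, $\boldsymbol{\beta}_n=\dfrac{(k,k\sqrt{q}/a;q)_n}{(q,a\sqrt{q};q)_n}q^{-n/2}$.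
   Context: Notation: $(x;q)_n=\prod_{i=0}^{n-1}(1-xq^i)$, $(x_1,\dots,x_j;q)_n=(x_1;q)_n\cdots(x_j;q)_n$. A pair of sequences $(\boldsymbol{\alpha}_n(a,k,q),\boldsymbol{\beta}_n(a,k,q))_{n\ge0}$ is a WP-Bailey pair (relative to $a$, with parameter $k$) if $\boldsymbol{\alpha}_0=1$ and for all $n\ge0$ \[\boldsymbol{\beta}_n=\sum_{j=0}^n\frac{(k/a;q)_{n-j}(k;q)_{n+j}}{(q;q)_{n-j}(aq;q)_{n+j}}\boldsymbol{\alpha}_j.\] *)

theory Defs
  imports Complex_Main
begin

definition qpoch :: "complex \<Rightarrow> complex \<Rightarrow> nat \<Rightarrow> complex" where
  "qpoch x q n = (\<Prod>i<n. 1 - x * q ^ i)"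

definition WP_Bailey_pair ::
  "complex \<Rightarrow> complex \<Rightarrow> complex \<Rightarrow> (nat \<Rightarrow> complex) \<Rightarrow> (nat \<Rightarrow> complex) \<Rightarrow> bool" where
  "WP_Bailey_pair a k q \<alpha> \<beta> \<longleftrightarrow>
     \<alpha> 0 = 1 \<and>
     (\<forall>n. \<beta> n = (\<Sum>j\<le>n. qpoch (k / a) q (n - j) * qpoch k q (n + j)
                          / (qpoch q q (n - j) * qpoch (a * q) q (n + j)) * \<alpha> j))"

end

theory Submission
  imports Defs
begin


definition kern :: "complex \<Rightarrow> complex \<Rightarrow> complex \<Rightarrow> nat \<Rightarrow> nat \<Rightarrow> complex" where
  "kern a k q n j = qpoch (k / a) q (n - j) * qpoch k q (n + j)
                          / (qpoch q q (n - j) * qpoch (a * q) q (n + j))"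

definition Gk :: "complex \<Rightarrow> complex \<Rightarrow> complex \<Rightarrow> nat \<Rightarrow> nat \<Rightarrow> complex" where
  "Gk a k q n j = qpoch (k / a) q (Suc n - j) * qpoch k q (n + j)
                          / (qpoch q q (Suc n - j) * qpoch (a * q) q (n + j))"

lemma qpoch_0[simp]: "qpoch x q 0 = 1" by (simp add: qpoch_def)
lemma qpoch_Suc: "qpoch x q (Suc n) = qpoch x q n * (1 - x * q ^ n)"
  by (simp add: qpoch_def)

lemma qpoch_nz: "(\<And>i. i < n \<Longrightarrow> x * q ^ i \<noteq> 1) \<Longrightarrow> qpoch x q n \<noteq> 0"
  unfolding qpoch_def by (subst prod_zero_iff) auto

lemma tele:
  fixes T G :: "nat \<Rightarrow> nat \<Rightarrow> complex" and \<rho> :: "nat \<Rightarrow> complex"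
  assumes loc: "\<And>j. j \<le> n \<Longrightarrow> T (Suc n) j - \<rho> n * T n j = G n (Suc j) - G n j"
    and G0: "G n 0 = 0" and Gend: "G n (Suc n) = - T (Suc n) (Suc n)"
  shows "(\<Sum>j\<le>Suc n. T (Suc n) j) = \<rho> n * (\<Sum>j\<le>n. T n j)"
proof -
  have "(\<Sum>j\<le>n. T (Suc n) j) - \<rho> n * (\<Sum>j\<le>n. T n j) = (\<Sum>j\<le>n. T (Suc n) j - \<rho> n * T n j)"
    by (simp add: sum_subtractf sum_distrib_left)
  also have "\<dots> = (\<Sum>j\<le>n. G n (Suc j) - G n j)" using loc by simp
  also have "\<dots> = G n (Suc n) - G n 0"
    using sum_lessThan_telescope[of "G n" "Suc n"] by (simp add: lessThan_Suc_atMost)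
  finally show ?thesis using G0 Gend by (simp add: algebra_simps)
qed

lemma pair_from_rec:
  fixes \<alpha> \<beta> G :: "nat \<Rightarrow> _" 
  assumes a0: "\<alpha> 0 = 1" and b0: "\<beta> 0 = 1"
    and brec: "\<And>n. \<beta> (Suc n) = \<rho> n * \<beta> n"
    and loc: "\<And>n j. j \<le> n \<Longrightarrow> kern a k q (Suc n) j * \<alpha> j - \<rho> n * (kern a k q n j * \<alpha> j)
                   = G n (Suc j) - G n j"
    and G0: "\<And>n. G n 0 = 0"
    and Gend: "\<And>n. G n (Suc n) = - (kern a k q (Suc n) (Suc n) * \<alpha> (Suc n))"
  shows "WP_Bailey_pair a k q \<alpha> \<beta>"
proof -
  have "\<beta> n = (\<Sum>j\<le>n. kern a k q n j * \<alpha> j)" for n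
  proof (induction n)
    case 0 then show ?case using a0 b0 by (simp add: kern_def)
  next
    case (Suc n)
    have "(\<Sum>j\<le>Suc n. kern a k q (Suc n) j * \<alpha> j) = \<rho> n * (\<Sum>j\<le>n. kern a k q n j * \<alpha> j)"
      by (rule tele[where G=G]) (use loc G0 Gend in auto)
    then show ?case using Suc brec by simp
  qed
  then show ?thesis unfolding WP_Bailey_pair_def kern_def using a0 by simp
qed




locale gen =
  fixes a q :: complex
  assumes q_gen: "\<And>i::nat. i \<ge> 1 \<Longrightarrow> q ^ i \<noteq> 1"
    and a_gen: "\<And>i::nat. a * q ^ i \<noteq> 1"
begin

lemma nq: "1 - q * q ^ m \<noteq> 0"
  using q_gen[of "Suc m"] by simp
lemma naq: "1 - a * q * q ^ m \<noteq> 0"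
  using a_gen[of "Suc m"] by (simp add: mult.assoc)
lemma qqnz: "qpoch q q m \<noteq> 0"
proof (rule qpoch_nz)
  fix i show "q * q ^ i \<noteq> 1" using q_gen[of "Suc i"] by simp
qed
lemma aqnz: "qpoch (a*q) q m \<noteq> 0"
proof (rule qpoch_nz)
  fix i show "a * q * q ^ i \<noteq> 1" using a_gen[of "Suc i"] by (simp add: mult.assoc)
qed

lemma frac1: fixes p1::"'b::field" shows "(p1*u)*(p2*v)/((q1*w)*(q2*z)) = p1*p2/(q1*q2)*(u*v)/(w*z)"
  by (simp add: divide_inverse mult_ac)
lemma frac2: fixes p1::"'b::field" shows "(p1*u)*p2/((q1*w)*q2) = p1*p2/(q1*q2)*u/w"
  by (simp add: divide_inverse mult_ac)
lemma frac3: fixes p1::"'b::field" shows "p1*(p2*v)/(q1*(q2*z)) = p1*p2/(q1*q2)*v/z"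
  by (simp add: divide_inverse mult_ac)
lemma frac4: fixes p2::"'b::field" shows "(p2*v)/(q2*z) = p2/q2*v/z"
  by (simp add: divide_inverse mult_ac)

lemma kern_Suc1: "kern a k q (Suc (j+m)) j = kern a k q (j+m) j * ((1 - k/a*q^m)*(1 - k*q^(j+m+j)))
      / ((1 - q*q^m)*(1 - a*q*q^(j+m+j)))"
proof -
  have e1: "Suc (j+m) - j = Suc m" "j+m-j = m" "Suc (j+m) + j = Suc (j+m+j)" by auto
  show ?thesis unfolding kern_def e1 qpoch_Suc
    by (rule frac1)
qed

lemma Gk1: "Gk a k q (j+m) j = kern a k q (j+m) j * (1 - k/a*q^m)/(1-q*q^m)"
proof -
  have e1: "Suc (j+m) - j = Suc m" "j+m-j = m" by auto
  show ?thesis unfolding kern_def Gk_def e1 qpoch_Suc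
    by (rule frac2)
qed

lemma Gk2: "Gk a k q (j+m) (Suc j) = kern a k q (j+m) j * (1-k*q^(j+m+j))/(1 - a*q*q^(j+m+j))"
proof -
  have e1: "Suc (j+m) - Suc j = m" "j+m-j = m" "j+m+Suc j = Suc (j+m+j)" by auto
  show ?thesis unfolding kern_def Gk_def e1 qpoch_Suc
    by (rule frac3)
qed

lemma Gkend: "kern a k q (Suc n) (Suc n) = Gk a k q n (Suc n) * (1 - k*q^(n+Suc n))/(1-a*q*q^(n+Suc n))"
proof -
  have e1: "Suc n - Suc n = 0" "Suc n + Suc n = Suc (n + Suc n)" by auto
  show ?thesis unfolding kern_def Gk_def e1 qpoch_Suc qpoch_0 mult_1_left
    by (rule frac4)
qed

end



lemma expSuc: "Suc j * (Suc j - 1) div 2 = j*(j-1) div 2 + j"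
proof -
  have "Suc j * (Suc j - 1) = j*(j-1) + 2*j" by (cases j) (auto simp: algebra_simps)
  then show ?thesis by simp
qed

definition A1 :: "complex \<Rightarrow> complex \<Rightarrow> nat \<Rightarrow> complex" where
  "A1 a q j = (-1)^j * q^(j*(j-1) div 2) * qpoch a q j / ((1-a)*qpoch q q j)"
definition al1 :: "complex \<Rightarrow> complex \<Rightarrow> nat \<Rightarrow> complex" where
  "al1 a q n = (-1) ^ n * q ^ (n * (n - 1) div 2) * (1 - a * q ^ (2 * n)) * qpoch a q n
              / ((1 - a) * qpoch q q n)"
definition be1 :: "complex \<Rightarrow> complex \<Rightarrow> complex \<Rightarrow> nat \<Rightarrow> complex" where
  "be1 a k q n = (-1) ^ n * k ^ n * q ^ (n * (n - 1) div 2) * qpoch k q n / (a ^ n * qpoch q q n)"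
definition rho1 :: "complex \<Rightarrow> complex \<Rightarrow> complex \<Rightarrow> nat \<Rightarrow> complex" where
  "rho1 a k q n = -k*q^n*(1-k*q^n)/(a*(1-q*q^n))"
definition c1 :: "complex \<Rightarrow> complex \<Rightarrow> nat \<Rightarrow> complex" where
  "c1 k q n = (1-k*q*q^n*q^n)/(q*q^n-1)"
definition G1 :: "complex \<Rightarrow> complex \<Rightarrow> complex \<Rightarrow> nat \<Rightarrow> nat \<Rightarrow> complex" where
  "G1 a k q n j = Gk a k q n j * (A1 a q j * (1 - q^j)) * c1 k q n"

lemma alg1:
  fixes Kb A X M k a q :: complex
  assumes "a \<noteq> 0" "1 - q*M \<noteq> 0" "1 - a*q*(X*X*M) \<noteq> 0" "1 - q*(X*M) \<noteq> 0"
  shows "Kb*((1-k/a*M)*(1-k*(X*X*M)))/((1-q*M)*(1-a*q*(X*X*M))) * (A*(1-a*(X*X)))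
     - (-k*(X*M)*(1-k*(X*M))/(a*(1-q*(X*M)))) * (Kb*(A*(1-a*(X*X))))
   = Kb*(1-k*(X*X*M))/(1-a*q*(X*X*M)) * (A*(-X*(1-a*X))) * ((1-k*q*(X*M)*(X*M))/(q*(X*M)-1))
     - Kb*(1-k/a*M)/(1-q*M)*(A*(1-X)) * ((1-k*q*(X*M)*(X*M))/(q*(X*M)-1))"
proof -
  have h: "q*(X*M) - 1 \<noteq> 0" using assms(4) by (metis eq_iff_diff_eq_0)
  have e: "a * inverse a = 1" "(1 - q*M)*inverse (1 - q*M) = 1" "(1 - a*q*(X*X*M))*inverse (1 - a*q*(X*X*M)) = 1"
     "(1 - q*(X*M))*inverse (1 - q*(X*M)) = 1" "(q*(X*M)-1)*inverse (q*(X*M)-1) = 1"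
    using assms h by auto
  show ?thesis unfolding divide_inverse inverse_mult_distrib using e by algebra
qed

context gen begin

lemma A1_Suc: "A1 a q (Suc j) * (1 - q ^ Suc j) = A1 a q j * (-(q^j)*(1-a*q^j))"
proof -
  have e: "(1-a)*inverse(1-a) = 1" "qpoch q q j * inverse (qpoch q q j) = 1"
     "(1-q*q^j)*inverse(1-q*q^j) = 1"
    using a_gen[of 0] qqnz[of j] nq[of j] by auto
  define Y where "Y = q^j"
  define E where "E = q ^ (j * (j - 1) div 2)"
  define s where "s = (-1::complex)^j"
  show ?thesis unfolding A1_def qpoch_Suc expSuc power_add power_Suc divide_inverse inverse_mult_distrib
     Y_def[symmetric] E_def[symmetric] s_def[symmetric]
    using e[unfolded Y_def[symmetric]] by algebra
qed

lemma al1_eq: "al1 a q j = A1 a q j * (1 - a*q^(2*j))"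
  unfolding al1_def A1_def by (simp add: divide_inverse mult_ac)

lemma be1_rec: assumes "a \<noteq> 0" shows "be1 a k q (Suc n) = rho1 a k q n * be1 a k q n"
proof -
  have e: "a*inverse a = 1" "a^n * inverse (a^n) = 1" "qpoch q q n * inverse (qpoch q q n) = 1"
     "(1-q*q^n)*inverse(1-q*q^n) = 1"
    using assms qqnz[of n] nq[of n] by auto
  define Y where "Y = q^n"
  define E where "E = q ^ (n * (n - 1) div 2)"
  define s where "s = (-1::complex)^n"
  define K where "K = k^n"
  define B where "B = a^n"
  show ?thesis unfolding be1_def rho1_def qpoch_Suc expSuc power_add power_Suc divide_inverse inverse_mult_distrib
     Y_def[symmetric] E_def[symmetric] s_def[symmetric] K_def[symmetric] B_def[symmetric]
    by (simp add: mult_ac)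
qed

lemma loc1: assumes "a \<noteq> 0" "j \<le> n"
  shows "kern a k q (Suc n) j * al1 a q j - rho1 a k q n * (kern a k q n j * al1 a q j)
       = G1 a k q n (Suc j) - G1 a k q n j"
proof -
  obtain m where n: "n = j+m" using assms le_Suc_ex by blast
  have X: "q^(j+m+j) = q^j*q^j*q^m" "q^(j+m) = q^j*q^m" "q^(2*j) = q^j*q^j"
    by (simp_all add: power_add mult_2)
  have h1: "1 - a*q*(q^j*q^j*q^m) \<noteq> 0" using naq[of "j+m+j"] unfolding X .
  have h2: "1 - q*(q^j*q^m) \<noteq> 0" using nq[of "j+m"] unfolding X .
  show ?thesis unfolding n G1_def A1_Suc kern_Suc1 Gk1 Gk2 al1_eq c1_def rho1_def X
    by (rule alg1[OF assms(1) nq h1 h2])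
qed

lemma end1: "G1 a k q n (Suc n) = - (kern a k q (Suc n) (Suc n) * al1 a q (Suc n))"
proof -
  have X: "q^(n+Suc n) = q*q^n*q^n" "q^(2*Suc n) = q*q*q^n*q^n" "q^(Suc n) = q*q^n"
    by (simp_all add: power_add mult_2)
  have h1: "1 - a*q*(q*q^n*q^n) \<noteq> 0" using naq[of "n+Suc n"] unfolding X .
  have h2: "1 - q*q^n \<noteq> 0" using nq[of n] .
  have e: "(1 - a*q*(q*q^n*q^n)) * inverse (1 - a*q*(q*q^n*q^n)) = 1"
      "(q*q^n - 1) * inverse (q*q^n - 1) = 1"
    using h1 h2 by (auto simp: right_inverse)
  define Y where "Y = q^n"
  show ?thesis unfolding G1_def Gkend al1_eq c1_def X divide_inverse Y_def[symmetric]
    using e[unfolded Y_def[symmetric]] by algebra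
qed

end



definition A2 :: "complex \<Rightarrow> complex \<Rightarrow> nat \<Rightarrow> complex" where
  "A2 a q j = (-1)^j * inverse a ^ j * qpoch (a^2) (q^2) j / ((1-a)*qpoch (q^2) (q^2) j)"
definition al2 :: "complex \<Rightarrow> complex \<Rightarrow> nat \<Rightarrow> complex" where
  "al2 a q n = (-1) ^ n * inverse a ^ n * (1 - a * q ^ (2 * n)) * qpoch (a ^ 2) (q ^ 2) n
              / ((1 - a) * qpoch (q ^ 2) (q ^ 2) n)"
definition be2 :: "complex \<Rightarrow> complex \<Rightarrow> complex \<Rightarrow> nat \<Rightarrow> complex" where
  "be2 a k q n = (-1) ^ n * inverse a ^ n * qpoch (k ^ 2) (q ^ 2) n / qpoch (q ^ 2) (q ^ 2) n"
definition rho2 :: "complex \<Rightarrow> complex \<Rightarrow> complex \<Rightarrow> nat \<Rightarrow> complex" where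
  "rho2 a k q n = -(1-k^2*(q^n*q^n))/(a*(1-q^2*(q^n*q^n)))"
definition c2 :: "complex \<Rightarrow> complex \<Rightarrow> nat \<Rightarrow> complex" where
  "c2 k q n = (1-k*q*q^n*q^n)/(q^2*(q^n*q^n) - 1)"
definition G2 :: "complex \<Rightarrow> complex \<Rightarrow> complex \<Rightarrow> nat \<Rightarrow> nat \<Rightarrow> complex" where
  "G2 a k q n j = Gk a k q n j * (A2 a q j * (1 - q^j*q^j)) * c2 k q n"

lemma alg2:
  fixes Kb A X M k a q :: complex
  assumes "a \<noteq> 0" "1 - q*M \<noteq> 0" "1 - a*q*(X*X*M) \<noteq> 0" "1 - q^2*((X*M)*(X*M)) \<noteq> 0"
  shows "Kb*((1-k/a*M)*(1-k*(X*X*M)))/((1-q*M)*(1-a*q*(X*X*M))) * (A*(1-a*(X*X)))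
     - (-(1-k^2*((X*M)*(X*M)))/(a*(1-q^2*((X*M)*(X*M))))) * (Kb*(A*(1-a*(X*X))))
   = Kb*(1-k*(X*X*M))/(1-a*q*(X*X*M)) * (A*(-(inverse a)*(1-a^2*(X*X)))) * ((1-k*q*(X*M)*(X*M))/(q^2*((X*M)*(X*M))-1))
     - Kb*(1-k/a*M)/(1-q*M)*(A*(1-X*X)) * ((1-k*q*(X*M)*(X*M))/(q^2*((X*M)*(X*M))-1))"
proof -
  have h: "q^2*((X*M)*(X*M)) - 1 \<noteq> 0" using assms(4) by (metis eq_iff_diff_eq_0)
  have e: "a * inverse a = 1" "(1 - q*M)*inverse (1 - q*M) = 1" "(1 - a*q*(X*X*M))*inverse (1 - a*q*(X*X*M)) = 1"
     "(1 - q^2*((X*M)*(X*M)))*inverse (1 - q^2*((X*M)*(X*M))) = 1" "(q^2*((X*M)*(X*M))-1)*inverse (q^2*((X*M)*(X*M))-1) = 1"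
    using assms h by auto
  show ?thesis unfolding divide_inverse inverse_mult_distrib using e by algebra
qed

context gen begin

lemma q2nz: "1 - q^2*(q^j*q^j) \<noteq> 0"
proof -
  have "q^(2*j+2) \<noteq> 1" using q_gen[of "2*j+2"] by simp
  moreover have "q^(2*j+2) = q^2*(q^j*q^j)" by (simp add: power_add mult_2 power2_eq_square)
  ultimately show ?thesis by simp
qed

lemma qq2nz: "qpoch (q^2) (q^2) m \<noteq> 0"
proof (rule qpoch_nz)
  fix i have "(q^2)^i = q^i*q^i" by (simp only: power2_eq_square power_mult_distrib)
  then show "q^2 * (q^2)^i \<noteq> 1" using q2nz[of i] by simp
qed

lemma A2_Suc: assumes "a \<noteq> 0"
  shows "A2 a q (Suc j) * (1 - q ^ Suc j * q ^ Suc j) = A2 a q j * (-(inverse a)*(1-a^2*(q^j*q^j)))"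
proof -
  have P: "(q^2)^j = q^j*q^j" by (simp only: power2_eq_square power_mult_distrib)
  define Y where "Y = q^j"
  define s where "s = (-1::complex)^j"
  define B where "B = inverse a ^ j"
  have e: "(1-a)*inverse(1-a) = 1" "qpoch (q^2) (q^2) j * inverse (qpoch (q^2) (q^2) j) = 1"
     "(1-q^2*(Y*Y))*inverse(1-q^2*(Y*Y)) = 1"
    using a_gen[of 0] qq2nz[of j] q2nz[of j] by (auto simp: Y_def)
  show ?thesis unfolding A2_def qpoch_Suc power_Suc divide_inverse inverse_mult_distrib P
     Y_def[symmetric] s_def[symmetric] B_def[symmetric]
    using e by algebra
qed

lemma al2_eq: "al2 a q j = A2 a q j * (1 - a*q^(2*j))"
  unfolding al2_def A2_def by (simp add: divide_inverse mult_ac)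

lemma be2_rec: assumes "a \<noteq> 0" shows "be2 a k q (Suc n) = rho2 a k q n * be2 a k q n"
proof -
  have P: "(q^2)^n = q^n*q^n" by (simp only: power2_eq_square power_mult_distrib)
  define Y where "Y = q^n"
  define s where "s = (-1::complex)^n"
  define B where "B = inverse a ^ n"
  have e: "qpoch (q^2) (q^2) n * inverse (qpoch (q^2) (q^2) n) = 1"
     "(1-q^2*(Y*Y))*inverse(1-q^2*(Y*Y)) = 1"
    using qq2nz[of n] q2nz[of n] by (auto simp: Y_def)
  show ?thesis unfolding be2_def rho2_def qpoch_Suc power_Suc divide_inverse inverse_mult_distrib P
     Y_def[symmetric] s_def[symmetric] B_def[symmetric]
    by (simp add: algebra_simps)
qed

lemma loc2: assumes "a \<noteq> 0" "j \<le> n"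
  shows "kern a k q (Suc n) j * al2 a q j - rho2 a k q n * (kern a k q n j * al2 a q j)
       = G2 a k q n (Suc j) - G2 a k q n j"
proof -
  obtain m where n: "n = j+m" using assms le_Suc_ex by blast
  have X: "q^(j+m+j) = q^j*q^j*q^m" "q^(j+m) = q^j*q^m" "q^(2*j) = q^j*q^j"
    by (simp_all add: power_add mult_2)
  have h1: "1 - a*q*(q^j*q^j*q^m) \<noteq> 0" using naq[of "j+m+j"] unfolding X .
  have h2: "1 - q^2*((q^j*q^m)*(q^j*q^m)) \<noteq> 0" using q2nz[of "j+m"] unfolding X .
  show ?thesis unfolding n G2_def A2_Suc[OF assms(1)] kern_Suc1 Gk1 Gk2 al2_eq c2_def rho2_def X
    by (rule alg2[OF assms(1) nq h1 h2])
qed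

lemma end2: "G2 a k q n (Suc n) = - (kern a k q (Suc n) (Suc n) * al2 a q (Suc n))"
proof -
  have X: "q^(n+Suc n) = q*q^n*q^n" "q^(2*Suc n) = q*q*q^n*q^n" "q^(Suc n) = q*q^n"
    by (simp_all add: power_add mult_2)
  have h1: "1 - a*q*(q*q^n*q^n) \<noteq> 0" using naq[of "n+Suc n"] unfolding X .
  have h2: "q^2*(q^n*q^n) - 1 \<noteq> 0" using q2nz[of n]
    by (metis eq_iff_diff_eq_0)
  define Y where "Y = q^n"
  have e: "(1 - a*q*(q*Y*Y)) * inverse (1 - a*q*(q*Y*Y)) = 1"
      "(q^2*(Y*Y) - 1) * inverse (q^2*(Y*Y) - 1) = 1"
    using h1 h2 by (auto simp: Y_def)
  show ?thesis unfolding G2_def Gkend al2_eq c2_def X divide_inverse Y_def[symmetric]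
    using e by algebra
qed

end



definition A3 :: "complex \<Rightarrow> complex \<Rightarrow> complex \<Rightarrow> nat \<Rightarrow> complex" where
  "A3 a q r j = inverse r ^ j * (qpoch a q j * qpoch r q j) / ((1-a)*(qpoch q q j * qpoch (a*r) q j))"
definition al3 :: "complex \<Rightarrow> complex \<Rightarrow> complex \<Rightarrow> nat \<Rightarrow> complex" where
  "al3 a q r n = inverse r ^ n * (1 - a * q ^ (2 * n)) * (qpoch a q n * qpoch r q n)
              / ((1 - a) * (qpoch q q n * qpoch (a * r) q n))"
definition be3 :: "complex \<Rightarrow> complex \<Rightarrow> complex \<Rightarrow> complex \<Rightarrow> nat \<Rightarrow> complex" where
  "be3 a k q r n = (qpoch k q n * qpoch (k * r / a) q n) / (qpoch q q n * qpoch (a * r) q n)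
              * inverse r ^ n"
definition rho3 :: "complex \<Rightarrow> complex \<Rightarrow> complex \<Rightarrow> complex \<Rightarrow> nat \<Rightarrow> complex" where
  "rho3 a k q r n = (1-k*q^n)*(1-k*r/a*q^n)/(r*(1-q*q^n)*(1-a*r*q^n))"
definition c3 :: "complex \<Rightarrow> complex \<Rightarrow> complex \<Rightarrow> complex \<Rightarrow> nat \<Rightarrow> complex" where
  "c3 a k q r n = (1-k*q*q^n*q^n)/((q*q^n-1)*(1-a*r*q^n))"
definition G3 :: "complex \<Rightarrow> complex \<Rightarrow> complex \<Rightarrow> complex \<Rightarrow> nat \<Rightarrow> nat \<Rightarrow> complex" where
  "G3 a k q r n j = Gk a k q n j * (A3 a q r j * ((1 - q^j)*(1-a*inverse r*q^j))) * c3 a k q r n"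

lemma alg3:
  fixes Kb A X M k a q r :: complex
  assumes "a \<noteq> 0" "r \<noteq> 0" "r*r = q" "1 - q*M \<noteq> 0" "1 - a*q*(X*X*M) \<noteq> 0" "1 - q*(X*M) \<noteq> 0"
    "1 - a*r*(X*M) \<noteq> 0"
  shows "Kb*((1-k/a*M)*(1-k*(X*X*M)))/((1-q*M)*(1-a*q*(X*X*M))) * (A*(1-a*(X*X)))
     - ((1-k*(X*M))*(1-k*r/a*(X*M))/(r*(1-q*(X*M))*(1-a*r*(X*M)))) * (Kb*(A*(1-a*(X*X))))
   = Kb*(1-k*(X*X*M))/(1-a*q*(X*X*M)) * (A*(inverse r*(1-a*X)*(1-r*X)))
       * ((1-k*q*(X*M)*(X*M))/((q*(X*M)-1)*(1-a*r*(X*M))))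
     - Kb*(1-k/a*M)/(1-q*M)*(A*((1-X)*(1-a*inverse r*X)))
       * ((1-k*q*(X*M)*(X*M))/((q*(X*M)-1)*(1-a*r*(X*M))))"
proof -
  have h: "q*(X*M) - 1 \<noteq> 0" using assms(6) by (metis eq_iff_diff_eq_0)
  have e: "a * inverse a = 1" "r * inverse r = 1" "(1 - q*M)*inverse (1 - q*M) = 1"
     "(1 - a*q*(X*X*M))*inverse (1 - a*q*(X*X*M)) = 1"
     "(1 - q*(X*M))*inverse (1 - q*(X*M)) = 1" "(q*(X*M)-1)*inverse (q*(X*M)-1) = 1"
     "(1 - a*r*(X*M))*inverse (1 - a*r*(X*M)) = 1"
    using assms h by auto
  show ?thesis unfolding divide_inverse inverse_mult_distrib using e assms(3) by algebra
qed

locale gen3 = gen +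
  fixes r :: complex
  assumes r_sq: "r^2 = q" and ar_gen: "\<And>i::nat. a * r * q ^ i \<noteq> 1" and q_nz: "q \<noteq> 0"
begin

lemma rr: "r*r = q" using r_sq by (simp add: power2_eq_square)
lemma r_nz: "r \<noteq> 0" using rr q_nz by auto
lemma arnz: "qpoch (a*r) q m \<noteq> 0"
  by (rule qpoch_nz) (use ar_gen in auto)
lemma nar: "1 - a*r*q^m \<noteq> 0" using ar_gen[of m] by simp

lemma A3_Suc:
  shows "A3 a q r (Suc j) * ((1 - q ^ Suc j)*(1-a*inverse r*q^Suc j)) = A3 a q r j * (inverse r*(1-a*q^j)*(1-r*q^j))"
proof -
  define Y where "Y = q^j"
  define B where "B = inverse r ^ j"
  have e: "(1-a)*inverse(1-a) = 1" "qpoch q q j * inverse (qpoch q q j) = 1"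
     "qpoch (a*r) q j * inverse (qpoch (a*r) q j) = 1"
     "(1-q*Y)*inverse(1-q*Y) = 1" "(1-a*r*Y)*inverse(1-a*r*Y) = 1" "r * inverse r = 1"
    using a_gen[of 0] qqnz[of j] arnz[of j] nq[of j] nar[of j] r_nz by (auto simp: Y_def)
  show ?thesis unfolding A3_def qpoch_Suc power_Suc divide_inverse inverse_mult_distrib
     Y_def[symmetric] B_def[symmetric]
    using e rr by algebra
qed

lemma al3_eq: "al3 a q r j = A3 a q r j * (1 - a*q^(2*j))"
  unfolding al3_def A3_def by (simp add: divide_inverse mult_ac)

lemma be3_rec: "be3 a k q r (Suc n) = rho3 a k q r n * be3 a k q r n"
proof -
  define Y where "Y = q^n"
  define B where "B = inverse r ^ n"
  show ?thesis unfolding be3_def rho3_def qpoch_Suc power_Suc divide_inverse inverse_mult_distrib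
     Y_def[symmetric] B_def[symmetric]
    by (simp add: mult_ac)
qed

lemma loc3: assumes "a \<noteq> 0" "j \<le> n"
  shows "kern a k q (Suc n) j * al3 a q r j - rho3 a k q r n * (kern a k q n j * al3 a q r j)
       = G3 a k q r n (Suc j) - G3 a k q r n j"
proof -
  obtain m where n: "n = j+m" using assms le_Suc_ex by blast
  have X: "q^(j+m+j) = q^j*q^j*q^m" "q^(j+m) = q^j*q^m" "q^(2*j) = q^j*q^j"
    by (simp_all add: power_add mult_2)
  have h1: "1 - a*q*(q^j*q^j*q^m) \<noteq> 0" using naq[of "j+m+j"] unfolding X .
  have h2: "1 - q*(q^j*q^m) \<noteq> 0" using nq[of "j+m"] unfolding X .
  have h3: "1 - a*r*(q^j*q^m) \<noteq> 0" using nar[of "j+m"] unfolding X by (simp add: mult.assoc)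
  show ?thesis unfolding n G3_def A3_Suc kern_Suc1 Gk1 Gk2 al3_eq c3_def rho3_def X
    by (rule alg3[OF assms(1) r_nz rr nq h1 h2 h3])
qed

lemma end3: "G3 a k q r n (Suc n) = - (kern a k q (Suc n) (Suc n) * al3 a q r (Suc n))"
proof -
  have X: "q^(n+Suc n) = q*q^n*q^n" "q^(2*Suc n) = q*q*q^n*q^n" "q^(Suc n) = q*q^n"
    by (simp_all add: power_add mult_2)
  have h1: "1 - a*q*(q*q^n*q^n) \<noteq> 0" using naq[of "n+Suc n"] unfolding X .
  have h2: "q*q^n - 1 \<noteq> 0" using nq[of n] by (metis eq_iff_diff_eq_0)
  define Y where "Y = q^n"
  have e: "(1 - a*q*(q*Y*Y)) * inverse (1 - a*q*(q*Y*Y)) = 1"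
      "(q*Y - 1) * inverse (q*Y - 1) = 1" "(1-a*r*Y)*inverse(1-a*r*Y) = 1" "r * inverse r = 1"
    using h1 h2 nar[of n] r_nz by (auto simp: Y_def)
  show ?thesis unfolding G3_def Gkend al3_eq c3_def X divide_inverse inverse_mult_distrib Y_def[symmetric]
    using e rr by algebra
qed

end


theorem mainTheorem15:
  fixes a k q r :: complex
  assumes q_nz: "q \<noteq> 0"
    and a_nz: "a \<noteq> 0"
    and r_sq: "r ^ 2 = q"
    and q_gen: "\<And>i::nat. i \<ge> 1 \<Longrightarrow> q ^ i \<noteq> 1"
    and a_gen: "\<And>i::nat. a * q ^ i \<noteq> 1"
    and ar_gen: "\<And>i::nat. a * r * q ^ i \<noteq> 1"
  shows
    "WP_Bailey_pair a k q
       (\<lambda>n. (-1) ^ n * q ^ (n * (n - 1) div 2) * (1 - a * q ^ (2 * n)) * qpoch a q n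
              / ((1 - a) * qpoch q q n))
       (\<lambda>n. (-1) ^ n * k ^ n * q ^ (n * (n - 1) div 2) * qpoch k q n / (a ^ n * qpoch q q n))
     \<and> WP_Bailey_pair a k q
       (\<lambda>n. (-1) ^ n * inverse a ^ n * (1 - a * q ^ (2 * n)) * qpoch (a ^ 2) (q ^ 2) n
              / ((1 - a) * qpoch (q ^ 2) (q ^ 2) n))
       (\<lambda>n. (-1) ^ n * inverse a ^ n * qpoch (k ^ 2) (q ^ 2) n / qpoch (q ^ 2) (q ^ 2) n)
     \<and> WP_Bailey_pair a k q
       (\<lambda>n. inverse r ^ n * (1 - a * q ^ (2 * n)) * (qpoch a q n * qpoch r q n)
              / ((1 - a) * (qpoch q q n * qpoch (a * r) q n)))
       (\<lambda>n. (qpoch k q n * qpoch (k * r / a) q n) / (qpoch q q n * qpoch (a * r) q n)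
              * inverse r ^ n)"
proof -
  interpret gen3 a q r
    by unfold_locales (use q_gen a_gen r_sq ar_gen q_nz in auto)
  have a1: "1 - a \<noteq> 0" using a_gen[of 0] by simp
  have P1: "WP_Bailey_pair a k q (al1 a q) (be1 a k q)"
  proof (rule pair_from_rec[where \<rho>="rho1 a k q" and G="G1 a k q"])
    show "al1 a q 0 = 1" using a1 by (simp add: al1_def)
    show "be1 a k q 0 = 1" by (simp add: be1_def)
    show "be1 a k q (Suc n) = rho1 a k q n * be1 a k q n" for n by (rule be1_rec[OF a_nz])
    show "kern a k q (Suc n) j * al1 a q j - rho1 a k q n * (kern a k q n j * al1 a q j)
          = G1 a k q n (Suc j) - G1 a k q n j" if "j \<le> n" for n j by (rule loc1[OF a_nz that])
    show "G1 a k q n 0 = 0" for n by (simp add: G1_def)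
    show "G1 a k q n (Suc n) = - (kern a k q (Suc n) (Suc n) * al1 a q (Suc n))" for n by (rule end1)
  qed
  have P2: "WP_Bailey_pair a k q (al2 a q) (be2 a k q)"
  proof (rule pair_from_rec[where \<rho>="rho2 a k q" and G="G2 a k q"])
    show "al2 a q 0 = 1" using a1 by (simp add: al2_def)
    show "be2 a k q 0 = 1" by (simp add: be2_def)
    show "be2 a k q (Suc n) = rho2 a k q n * be2 a k q n" for n by (rule be2_rec[OF a_nz])
    show "kern a k q (Suc n) j * al2 a q j - rho2 a k q n * (kern a k q n j * al2 a q j)
          = G2 a k q n (Suc j) - G2 a k q n j" if "j \<le> n" for n j by (rule loc2[OF a_nz that])
    show "G2 a k q n 0 = 0" for n by (simp add: G2_def)
    show "G2 a k q n (Suc n) = - (kern a k q (Suc n) (Suc n) * al2 a q (Suc n))" for n by (rule end2)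
  qed
  have P3: "WP_Bailey_pair a k q (al3 a q r) (be3 a k q r)"
  proof (rule pair_from_rec[where \<rho>="rho3 a k q r" and G="G3 a k q r"])
    show "al3 a q r 0 = 1" using a1 by (simp add: al3_def)
    show "be3 a k q r 0 = 1" by (simp add: be3_def)
    show "be3 a k q r (Suc n) = rho3 a k q r n * be3 a k q r n" for n by (rule be3_rec)
    show "kern a k q (Suc n) j * al3 a q r j - rho3 a k q r n * (kern a k q n j * al3 a q r j)
          = G3 a k q r n (Suc j) - G3 a k q r n j" if "j \<le> n" for n j by (rule loc3[OF a_nz that])
    show "G3 a k q r n 0 = 0" for n by (simp add: G3_def)
    show "G3 a k q r n (Suc n) = - (kern a k q (Suc n) (Suc n) * al3 a q r (Suc n))" for n by (rule end3)
  qed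
  show ?thesis using P1 P2 P3
    unfolding al1_def[abs_def] be1_def[abs_def] al2_def[abs_def] be2_def[abs_def]
      al3_def[abs_def] be3_def[abs_def]
    by blast
qed

end
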